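(* Let $R$ be a noetherian ring, $\nu$ a valuation having a center on $R$, $b\in R\setminus\mathrm{supp}(\nu)$ and $a_1,\ldots,a_r\in R$ with $\nu(b)\le\nu(a_i)$ for all $i$, and let $R'=(R/J(b))[a_1/b,\ldots,a_r/b]\subseteq R_b$. Then for every $c'\in R'$ there is $c\in R$ with $\mathrm{ann}_{R'}(c')=\mathrm{ann}_{R'}(c/1)$. Moreover, if $\mathrm{ann}_{R'}(c')$ is a prime ideal of $R'$, then $\mathrm{ann}_R(b^Nc)$ is a prime ideal of $R$ for some $N\in\mathbb N$.
   Context: A valuation on a ring $R$ is a map $\nu:R\to\Gamma\cup\{\infty\}$ ($\Gamma$ an ordered abelian group) with $\nu(ab)=\nu(a)+\nu(b)$, $\nu(a+b)\ge\min\{\nu(a),\nu(b)\}$, $\nu(1)=0$, $\nu(0)=\infty$, whose support $\mathrm{supp}(\nu)=\{a:\nu(a)=\infty\}$ is a minimal prime ideal; $\nu$ has a center on $R$ if $\nu\ge0$ on $R$. For $b\in R$, $J(b)=\bigcup_{i\ge1}\mathrm{ann}_R(b^i)$ is the kernel of $R\to R_b$, so $R/J(b)$ is identified with its image in $R_b$. *)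

theory Defs
  imports Main
begin

definition is_ideal :: "'a::comm_ring_1 set \<Rightarrow> bool" where
  "is_ideal I \<longleftrightarrow> 0 \<in> I \<and> (\<forall>x\<in>I. \<forall>y\<in>I. x + y \<in> I) \<and> (\<forall>x\<in>I. \<forall>r. r * x \<in> I)"

definition is_prime_ideal :: "'a::comm_ring_1 set \<Rightarrow> bool" where
  "is_prime_ideal P \<longleftrightarrow> is_ideal P \<and> (1::'a) \<notin> P \<and> (\<forall>x y. x * y \<in> P \<longrightarrow> x \<in> P \<or> y \<in> P)"

definition is_minimal_prime :: "'a::comm_ring_1 set \<Rightarrow> bool" where
  "is_minimal_prime P \<longleftrightarrow> is_prime_ideal P \<and> (\<forall>Q. is_prime_ideal Q \<and> Q \<subseteq> P \<longrightarrow> Q = P)"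

definition noetherian_ring :: "'a::comm_ring_1 itself \<Rightarrow> bool" where
  "noetherian_ring _ \<longleftrightarrow>
     (\<forall>f :: nat \<Rightarrow> 'a set. (\<forall>n. is_ideal (f n) \<and> f n \<subseteq> f (Suc n)) \<longrightarrow> (\<exists>N. \<forall>n\<ge>N. f n = f N))"

definition ann :: "'a::comm_ring_1 \<Rightarrow> 'a set" where
  "ann x = {y. y * x = 0}"

section \<open>Valuations with values in \<Gamma> \<union> {\<infinity>}; None stands for \<infinity>\<close>

fun ext_le :: "'g::linordered_ab_group_add option \<Rightarrow> 'g option \<Rightarrow> bool" where
  "ext_le _ None = True"
| "ext_le None (Some _) = False"
| "ext_le (Some x) (Some y) = (x \<le> y)"

fun ext_add :: "'g::linordered_ab_group_add option \<Rightarrow> 'g option \<Rightarrow> 'g option" where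
  "ext_add (Some x) (Some y) = Some (x + y)"
| "ext_add _ _ = None"

definition supp :: "('a \<Rightarrow> 'g option) \<Rightarrow> 'a set" where
  "supp v = {a. v a = None}"

definition valuation :: "('a::comm_ring_1 \<Rightarrow> 'g::linordered_ab_group_add option) \<Rightarrow> bool" where
  "valuation v \<longleftrightarrow>
     (\<forall>a b. v (a * b) = ext_add (v a) (v b)) \<and>
     (\<forall>a b. ext_le (v a) (v (a + b)) \<or> ext_le (v b) (v (a + b))) \<and>
     v 1 = Some 0 \<and> v 0 = None \<and>
     is_minimal_prime (supp v)"

definition has_center :: "('a::comm_ring_1 \<Rightarrow> 'g::linordered_ab_group_add option) \<Rightarrow> bool" where
  "has_center v \<longleftrightarrow> (\<forall>a. ext_le (Some 0) (v a))"

section \<open>The localization R_b, via representatives (x, n) standing for x / b^n\<close>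

definition loc_eq :: "'a::comm_ring_1 \<Rightarrow> 'a \<times> nat \<Rightarrow> 'a \<times> nat \<Rightarrow> bool" where
  "loc_eq b p q \<longleftrightarrow> (\<exists>k. b ^ k * (fst p * b ^ snd q - fst q * b ^ snd p) = 0)"

definition loc_add :: "'a::comm_ring_1 \<Rightarrow> 'a \<times> nat \<Rightarrow> 'a \<times> nat \<Rightarrow> 'a \<times> nat" where
  "loc_add b p q = (fst p * b ^ snd q + fst q * b ^ snd p, snd p + snd q)"

definition loc_mult :: "'a::comm_ring_1 \<times> nat \<Rightarrow> 'a \<times> nat \<Rightarrow> 'a \<times> nat" where
  "loc_mult p q = (fst p * fst q, snd p + snd q)"

text \<open>R' = (R/J(b))[a_1/b, ..., a_r/b] inside R_b: the subring of R_b generated by the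
  image of R (which is R/J(b)) and the fractions a_i/b, as a set of representatives
  closed under equality in R_b.\<close>
inductive_set Rprime :: "'a::comm_ring_1 \<Rightarrow> 'a list \<Rightarrow> ('a \<times> nat) set"
  for b :: 'a and as :: "'a list" where
  base: "(r, 0) \<in> Rprime b as"
| gen: "a \<in> set as \<Longrightarrow> (a, 1) \<in> Rprime b as"
| add: "p \<in> Rprime b as \<Longrightarrow> q \<in> Rprime b as \<Longrightarrow> loc_add b p q \<in> Rprime b as"
| mult: "p \<in> Rprime b as \<Longrightarrow> q \<in> Rprime b as \<Longrightarrow> loc_mult p q \<in> Rprime b as"
| eq: "p \<in> Rprime b as \<Longrightarrow> loc_eq b p q \<Longrightarrow> q \<in> Rprime b as"

definition ann_Rprime :: "'a::comm_ring_1 \<Rightarrow> 'a list \<Rightarrow> 'a \<times> nat \<Rightarrow> ('a \<times> nat) set" where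
  "ann_Rprime b as c' = {d \<in> Rprime b as. loc_eq b (loc_mult d c') (0, 0)}"

definition prime_ideal_Rprime :: "'a::comm_ring_1 \<Rightarrow> 'a list \<Rightarrow> ('a \<times> nat) set \<Rightarrow> bool" where
  "prime_ideal_Rprime b as P \<longleftrightarrow>
     P \<subseteq> Rprime b as \<and>
     (\<forall>p\<in>P. \<forall>q\<in>Rprime b as. loc_eq b p q \<longrightarrow> q \<in> P) \<and>
     (0, 0) \<in> P \<and>
     (\<forall>p\<in>P. \<forall>q\<in>P. loc_add b p q \<in> P) \<and>
     (\<forall>p\<in>P. \<forall>q\<in>Rprime b as. loc_mult q p \<in> P) \<and>
     (1, 0) \<notin> P \<and>
     (\<forall>p\<in>Rprime b as. \<forall>q\<in>Rprime b as. loc_mult p q \<in> P \<longrightarrow> p \<in> P \<or> q \<in> P)"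

end

theory Submission
  imports Defs
begin

lemma ann_Rprime_mem:
  "d \<in> ann_Rprime b as (x, n) \<longleftrightarrow> d \<in> Rprime b as \<and> (\<exists>k. b ^ k * (fst d * x) = 0)"
  by (simp add: ann_Rprime_def loc_eq_def loc_mult_def)

theorem mainTheorem8:
  fixes v :: "'a::comm_ring_1 \<Rightarrow> 'g::linordered_ab_group_add option"
    and b :: 'a and as :: "'a list"
  assumes "noetherian_ring TYPE('a)"
    and "valuation v" and "has_center v"
    and "b \<notin> supp v"
    and "\<forall>a\<in>set as. ext_le (v b) (v a)"
    and "c' \<in> Rprime b as"
  shows "\<exists>c::'a. ann_Rprime b as c' = ann_Rprime b as (c, 0) \<and>
           (prime_ideal_Rprime b as (ann_Rprime b as c') \<longrightarrow>
              (\<exists>N::nat. is_prime_ideal (ann (b ^ N * c))))"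
proof -
  obtain x n where c': "c' = (x, n)" by (cases c') auto
  have eq: "ann_Rprime b as c' = ann_Rprime b as (x, 0)"
    unfolding c' by (auto simp: ann_Rprime_mem)
  define f where "f = (\<lambda>m. ann (b ^ m * x))"
  have "\<forall>m. is_ideal (f m) \<and> f m \<subseteq> f (Suc m)"
  proof
    fix m
    have "is_ideal (f m)"
      unfolding is_ideal_def f_def ann_def by (auto simp: distrib_right mult.assoc)
    moreover have "f m \<subseteq> f (Suc m)"
    proof
      fix y assume "y \<in> f m"
      then have "y * (b ^ m * x) = 0" by (simp add: f_def ann_def)
      then have "b * (y * (b ^ m * x)) = 0" by simp
      then show "y \<in> f (Suc m)" by (simp add: f_def ann_def algebra_simps)
    qed
    ultimately show "is_ideal (f m) \<and> f m \<subseteq> f (Suc m)" by blast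
  qed
  with assms(1) obtain N where N: "\<And>m. m \<ge> N \<Longrightarrow> f m = f N"
    unfolding noetherian_ring_def by blast
  have mono: "f m \<subseteq> f m'" if "m \<le> m'" for m m'
    using that
  proof (induction m' rule: dec_induct)
    case (step k)
    then show ?case using \<open>\<forall>m. is_ideal (f m) \<and> f m \<subseteq> f (Suc m)\<close> by blast
  qed simp
  have key: "(\<exists>k. b ^ k * (d * x) = 0) \<longleftrightarrow> d \<in> f N" for d
  proof
    assume "\<exists>k. b ^ k * (d * x) = 0"
    then obtain k where "b ^ k * (d * x) = 0" by blast
    then have "d \<in> f k" by (simp add: f_def ann_def algebra_simps)
    also have "f k \<subseteq> f (max k N)" by (rule mono) simp
    also have "f (max k N) = f N" by (rule N) simp
    finally show "d \<in> f N" .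
  next
    assume "d \<in> f N"
    then show "\<exists>k. b ^ k * (d * x) = 0" by (auto simp: f_def ann_def algebra_simps)
  qed
  have mem0: "(d, 0) \<in> ann_Rprime b as (x, 0) \<longleftrightarrow> d \<in> f N" for d
    using key by (simp add: ann_Rprime_mem Rprime.base)
  show ?thesis
  proof (rule exI[of _ x], rule conjI)
    show "ann_Rprime b as c' = ann_Rprime b as (x, 0)" by (rule eq)
    show "prime_ideal_Rprime b as (ann_Rprime b as c') \<longrightarrow> (\<exists>N. is_prime_ideal (ann (b ^ N * x)))"
    proof
    assume P: "prime_ideal_Rprime b as (ann_Rprime b as c')"
    have "is_prime_ideal (f N)"
      unfolding is_prime_ideal_def
    proof (intro conjI)
      show "is_ideal (f N)" using \<open>\<forall>m. is_ideal (f m) \<and> f m \<subseteq> f (Suc m)\<close> by blast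
      show "1 \<notin> f N" using P mem0[of 1] eq unfolding prime_ideal_Rprime_def by auto
      show "\<forall>y z. y * z \<in> f N \<longrightarrow> y \<in> f N \<or> z \<in> f N"
      proof (intro allI impI)
      fix y z assume "y * z \<in> f N"
      then have "loc_mult (y, 0) (z, 0) \<in> ann_Rprime b as c'"
        using mem0[of "y*z"] eq by (simp add: loc_mult_def)
      then have "(y, 0) \<in> ann_Rprime b as c' \<or> (z, 0) \<in> ann_Rprime b as c'"
        using P Rprime.base unfolding prime_ideal_Rprime_def by blast
      then show "y \<in> f N \<or> z \<in> f N" using mem0 eq by auto
      qed
    qed
    then show "\<exists>N. is_prime_ideal (ann (b ^ N * x))" unfolding f_def by blast
    qed
  qed
qed

end
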